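(* For all integers $n\ge 2$ and $b\ge 1$, the circulant graph $G_{nb,b}$ satisfies $\operatorname{box}(G_{nb,b})\le\chi(G_{nb,b})$.
   Context: For integers $a\ge 2b\ge 2$, $G_{a,b}$ is the graph with vertex set $\{0,1,\ldots,a-1\}$ in which distinct $u,v$ are adjacent if and only if $u\in\{v+b,v+b+1,\ldots,v+a-b\}$ with addition modulo $a$. The boxicity $\operatorname{box}(G)$ is the minimum nonnegative integer $k$ such that $G$ is isomorphic to the intersection graph of a family of boxes (Cartesian products of $k$ closed real intervals) in $\mathbb{R}^k$. $\chi(G)$ is the chromatic number. *)

theory Defs
  imports Complex_Main "HOL-Library.FuncSet"
begin

text \<open>Simple graphs are given by a vertex set V and an adjacency predicate E
  (only its values on distinct vertices of V matter).\<close>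

definition circ_V :: "nat \<Rightarrow> nat set" where
  "circ_V a = {0..<a}"

definition circ_adj :: "nat \<Rightarrow> nat \<Rightarrow> nat \<Rightarrow> nat \<Rightarrow> bool" where
  "circ_adj a b u v \<longleftrightarrow> u \<noteq> v \<and> (\<exists>j\<in>{b..a-b}. u mod a = (v + j) mod a)"

definition box_k :: "nat \<Rightarrow> (nat \<Rightarrow> real) \<Rightarrow> (nat \<Rightarrow> real) \<Rightarrow> (nat \<Rightarrow> real) set" where
  "box_k k l r = PiE {..<k} (\<lambda>i. {l i..r i})"

definition box_representable :: "'v set \<Rightarrow> ('v \<Rightarrow> 'v \<Rightarrow> bool) \<Rightarrow> nat \<Rightarrow> bool" where
  "box_representable V E k \<longleftrightarrow>
     (\<exists>l r :: 'v \<Rightarrow> nat \<Rightarrow> real.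
        (\<forall>v\<in>V. \<forall>i<k. l v i \<le> r v i) \<and>
        (\<forall>u\<in>V. \<forall>v\<in>V. u \<noteq> v \<longrightarrow>
            (E u v \<longleftrightarrow> box_k k (l u) (r u) \<inter> box_k k (l v) (r v) \<noteq> {})))"

definition boxicity :: "'v set \<Rightarrow> ('v \<Rightarrow> 'v \<Rightarrow> bool) \<Rightarrow> nat" where
  "boxicity V E = (LEAST k. box_representable V E k)"

definition colorable :: "'v set \<Rightarrow> ('v \<Rightarrow> 'v \<Rightarrow> bool) \<Rightarrow> nat \<Rightarrow> bool" where
  "colorable V E k \<longleftrightarrow> (\<exists>c :: 'v \<Rightarrow> nat. (\<forall>v\<in>V. c v < k) \<and>
      (\<forall>u\<in>V. \<forall>v\<in>V. u \<noteq> v \<and> E u v \<longrightarrow> c u \<noteq> c v))"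

definition chromatic_number :: "'v set \<Rightarrow> ('v \<Rightarrow> 'v \<Rightarrow> bool) \<Rightarrow> nat" where
  "chromatic_number V E = (LEAST k. colorable V E k)"

end

theory Submission
  imports Defs
begin


lemma box_int_iff:
  "box_k k l1 r1 \<inter> box_k k l2 r2 \<noteq> {} \<longleftrightarrow> (\<forall>i<k. l1 i \<le> r2 i \<and> l2 i \<le> r1 i \<and> l1 i \<le> r1 i \<and> l2 i \<le> r2 i)"
  unfolding box_k_def PiE_Int PiE_eq_empty_iff by auto

lemma near_iff:
  fixes n b qu qv ru rv :: nat
  assumes "n \<ge> 2" "qu < n" "qv < n" "ru < b" "rv < b"
  shows "(qu*b+ru + n*b - (qv*b+rv)) mod (n*b) < b \<longleftrightarrow>
    (qu=qv \<and> rv \<le> ru) \<or> (qu = Suc qv mod n \<and> ru < rv)"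
proof (cases "qv*b+rv \<le> qu*b+ru")
  case True
  have lt: "qu*b+ru - (qv*b+rv) < n*b"
  proof -
    have "qu*b+ru < (qu+1)*b" using assms by simp
    also have "\<dots> \<le> n*b" using assms by (intro mult_le_mono1) simp
    finally show ?thesis by simp
  qed
  have e: "qu*b+ru + n*b - (qv*b+rv) = (qu*b+ru - (qv*b+rv)) + n*b" using True by simp
  have d: "(qu*b+ru + n*b - (qv*b+rv)) mod (n*b) = qu*b+ru - (qv*b+rv)"
    unfolding e using lt by simp
  have qle: "qv \<le> qu"
  proof (rule ccontr)
    assume "\<not> qv \<le> qu"
    hence "(qu+1)*b \<le> qv*b" by (intro mult_le_mono1) simp
    thus False using True assms by simp
  qed
  show ?thesis
  proof (cases "qu = qv")
    case True thus ?thesis using d \<open>qv*b+rv \<le> qu*b+ru\<close> assms by auto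
  next
    case False
    hence ne: "Suc qv mod n = Suc qv" using qle assms by auto
    show ?thesis
    proof (cases "qu = Suc qv")
      case True thus ?thesis using d ne assms by auto
    next
      case False
      hence "qv + 2 \<le> qu" using qle \<open>qu \<noteq> qv\<close> by simp
      hence "(qv+2)*b \<le> qu*b" by (intro mult_le_mono1)
      thus ?thesis using d ne False \<open>qu \<noteq> qv\<close> assms by auto
    qed
  qed
next
  case False
  have "qv*b+rv < (qv+1)*b" using assms by simp
  also have "\<dots> \<le> n*b" using assms by (intro mult_le_mono1) simp
  finally have "qv*b+rv < n*b" .
  hence lt: "qu*b+ru + n*b - (qv*b+rv) < n*b" using False by simp
  have d: "(qu*b+ru + n*b - (qv*b+rv)) mod (n*b) = qu*b+ru + n*b - (qv*b+rv)"
    using lt by simp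
  have qle: "qu \<le> qv"
  proof (rule ccontr)
    assume "\<not> qu \<le> qv"
    hence "(qv+1)*b \<le> qu*b" by (intro mult_le_mono1) simp
    thus False using False assms by simp
  qed
  show ?thesis
  proof (cases "qu = 0 \<and> qv = n - 1")
    case True
    hence "n*b = qv*b + b" using assms by (cases n) auto
    moreover have "Suc qv mod n = qu" using True assms by simp
    moreover have "qu \<noteq> qv" using True assms by simp
    ultimately show ?thesis using d True assms by auto
  next
    case c2: False
    have nm: "qu \<noteq> Suc qv mod n"
    proof
      assume h: "qu = Suc qv mod n"
      show False
      proof (cases "Suc qv < n")
        case True thus False using h qle by simp
      next
        case False hence "qv = n - 1" using assms by simp
        moreover have "qu = 0" using h False assms by (metis Suc_lessI mod_self)
        ultimately show False using c2 by simp
      qed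
    qed
    have "qu + n \<ge> qv + 2"
    proof (cases "qu = qv")
      case True thus ?thesis using assms by simp
    next
      case False thus ?thesis using c2 qle assms by auto
    qed
    hence "(qv+2)*b \<le> (qu+n)*b" by (intro mult_le_mono1)
    thus ?thesis using d nm False assms by (auto simp: algebra_simps)
  qed
qed

lemma modd1: "v < (u::nat) \<Longrightarrow> u < a \<Longrightarrow> (u + a - v) mod a = u - v"
proof -
  assume h: "v < u" "u < a"
  have "u + a - v = (u - v) + a" using h by linarith
  hence "(u + a - v) mod a = (u - v) mod a" by (metis mod_add_self2)
  also have "\<dots> = u - v" using h by (intro mod_less) linarith
  finally show ?thesis .
qed

lemma modd2: "v < (u::nat) \<Longrightarrow> u < a \<Longrightarrow> (v + a - u) mod a = a - (u - v)"
proof -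
  assume h: "v < u" "u < a"
  have "(v + a - u) mod a = v + a - u" using h by (intro mod_less) linarith
  also have "\<dots> = a - (u - v)" using h by linarith
  finally show ?thesis .
qed

lemma solve_j:
  fixes a u v j :: nat
  assumes "v < a" "j < a" "u = (v + j) mod a"
  shows "(v + j < a \<and> u = v + j) \<or> (a \<le> v + j \<and> u = v + j - a)"
proof (cases "v + j < a")
  case True thus ?thesis using assms(3) by (metis mod_less)
next
  case False
  hence "(v + j) mod a = (v + j - a) mod a" by (intro le_mod_geq) linarith
  also have "\<dots> = v + j - a" using assms False by (intro mod_less) linarith
  finally show ?thesis using assms(3) False by linarith
qed

lemma adj_iff0:
  fixes a b u v :: nat
  assumes "u < a" "v < a" "u \<noteq> v" "1 \<le> b"
  shows "circ_adj a b u v \<longleftrightarrow> b \<le> (u + a - v) mod a \<and> b \<le> (v + a - u) mod a"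
proof
  assume "circ_adj a b u v"
  then obtain j where j0: "j \<in> {b..a-b}" and j3: "u mod a = (v + j) mod a"
    unfolding circ_adj_def by blast
  from j0 have j: "b \<le> j" "j \<le> a - b" "u mod a = (v + j) mod a" using j3 by simp_all
  have u: "u = (v+j) mod a" using j(3) mod_less[OF assms(1)] by linarith
  have ja: "j < a" using j assms by linarith
  have sj: "(v + j < a \<and> u = v + j) \<or> (a \<le> v + j \<and> u = v + j - a)"
    using solve_j[OF assms(2) ja u] .
  show "b \<le> (u + a - v) mod a \<and> b \<le> (v + a - u) mod a"
  proof (cases "v < u")
    case True
    have "b \<le> u - v \<and> b \<le> a - (u - v)"
      using sj
    proof (elim disjE conjE)
      assume "u = v + j" thus ?thesis using j True ja assms by linarith
    next
      assume "u = v + j - a" "a \<le> v + j" thus ?thesis using j True ja assms by linarith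
    qed
    thus ?thesis unfolding modd1[OF True assms(1)] modd2[OF True assms(1)] .
  next
    case False
    hence F: "u < v" using assms by linarith
    have "b \<le> a - (v - u) \<and> b \<le> v - u"
      using sj
    proof (elim disjE conjE)
      assume "u = v + j" thus ?thesis using j F ja assms by linarith
    next
      assume "u = v + j - a" "a \<le> v + j" thus ?thesis using j F ja assms by linarith
    qed
    thus ?thesis unfolding modd1[OF F assms(2)] modd2[OF F assms(2)] .
  qed
next
  assume h: "b \<le> (u + a - v) mod a \<and> b \<le> (v + a - u) mod a"
  show "circ_adj a b u v"
  proof (cases "v < u")
    case True
    have h1: "b \<le> u - v" "u - v \<le> a - b"
      using h assms unfolding modd1[OF True assms(1)] modd2[OF True assms(1)] by linarith+
    have e: "v + (u - v) = u" using True by linarith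
    have "u mod a = (v + (u - v)) mod a" by (subst e) (rule refl)
    moreover have "u - v \<in> {b..a-b}" using h1 by simp
    ultimately show "circ_adj a b u v" unfolding circ_adj_def using assms(3) by blast
  next
    case False
    hence F: "u < v" using assms by linarith
    have h1: "b \<le> u + a - v" "u + a - v \<le> a - b"
      using h unfolding modd1[OF F assms(2)] modd2[OF F assms(2)] using F assms by linarith+
    have e: "v + (u + a - v) = u + a" using F assms by linarith
    have "(v + (u + a - v)) mod a = u mod a" unfolding e by (rule mod_add_self2)
    hence "u mod a = (v + (u + a - v)) mod a" by (rule sym)
    moreover have "u + a - v \<in> {b..a-b}" using h1 by simp
    ultimately show "circ_adj a b u v" unfolding circ_adj_def using assms(3) by blast
  qed
qed

lemma adj_iff:
  fixes a b u v :: nat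
  assumes "u < a" "v < a" "u \<noteq> v" "1 \<le> b"
  shows "circ_adj a b u v \<longleftrightarrow> \<not> (u + a - v) mod a < b \<and> \<not> (v + a - u) mod a < b"
  unfolding not_less using adj_iff0[OF assms] .

definition Lf :: "nat \<Rightarrow> nat \<Rightarrow> nat \<Rightarrow> real" where
  "Lf q r i = (if q = i then 2 * real r else -1)"

definition Rf :: "nat \<Rightarrow> nat \<Rightarrow> nat \<Rightarrow> nat \<Rightarrow> nat \<Rightarrow> real" where
  "Rf n b q r i = (if q = i \<or> q = Suc i mod n then 2 * real r else 2 * real b)"

lemma suc_mod_ne: "i < n \<Longrightarrow> 2 \<le> n \<Longrightarrow> Suc i mod n \<noteq> i"
proof (cases "Suc i < n")
  case True thus ?thesis by simp
next
  case False
  assume "i < n" "2 \<le> n"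
  hence "Suc i = n" using False by linarith
  thus ?thesis using \<open>2 \<le> n\<close> by simp
qed

lemma comb:
  fixes n b qu qv ru rv :: nat
  assumes "n \<ge> 2" "qu < n" "qv < n" "ru < b" "rv < b" "(qu, ru) \<noteq> (qv, rv)"
  shows "(\<forall>i<n. Lf qu ru i \<le> Rf n b qv rv i \<and> Lf qv rv i \<le> Rf n b qu ru i
            \<and> Lf qu ru i \<le> Rf n b qu ru i \<and> Lf qv rv i \<le> Rf n b qv rv i)
   \<longleftrightarrow> (\<not>((qu=qv \<and> rv \<le> ru) \<or> (qu = Suc qv mod n \<and> ru < rv)) \<and>
        \<not>((qv=qu \<and> ru \<le> rv) \<or> (qv = Suc qu mod n \<and> rv < ru)))"
proof
  assume H: "\<forall>i<n. Lf qu ru i \<le> Rf n b qv rv i \<and> Lf qv rv i \<le> Rf n b qu ru i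
            \<and> Lf qu ru i \<le> Rf n b qu ru i \<and> Lf qv rv i \<le> Rf n b qv rv i"
  have Hu: "Lf qu ru qu \<le> Rf n b qv rv qu \<and> Lf qv rv qu \<le> Rf n b qu ru qu" using H assms by blast
  have Hv: "Lf qu ru qv \<le> Rf n b qv rv qv \<and> Lf qv rv qv \<le> Rf n b qu ru qv" using H assms by blast
  have s1: "Suc qu mod n \<noteq> qu" "Suc qv mod n \<noteq> qv" using suc_mod_ne assms by auto
  have "qu \<noteq> qv"
  proof
    assume e: "qu = qv"
    hence "ru = rv" using Hu by (simp add: Lf_def Rf_def)
    thus False using e assms(6) by simp
  qed
  moreover have "qu = Suc qv mod n \<Longrightarrow> rv \<le> ru"
    using Hv s1 \<open>qu \<noteq> qv\<close> by (auto simp: Lf_def Rf_def)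
  moreover have "qv = Suc qu mod n \<Longrightarrow> ru \<le> rv"
    using Hu s1 \<open>qu \<noteq> qv\<close> by (auto simp: Lf_def Rf_def)
  ultimately show "\<not>((qu=qv \<and> rv \<le> ru) \<or> (qu = Suc qv mod n \<and> ru < rv)) \<and>
        \<not>((qv=qu \<and> ru \<le> rv) \<or> (qv = Suc qu mod n \<and> rv < ru))" by auto
next
  assume H: "\<not>((qu=qv \<and> rv \<le> ru) \<or> (qu = Suc qv mod n \<and> ru < rv)) \<and>
        \<not>((qv=qu \<and> ru \<le> rv) \<or> (qv = Suc qu mod n \<and> rv < ru))"
  show "\<forall>i<n. Lf qu ru i \<le> Rf n b qv rv i \<and> Lf qv rv i \<le> Rf n b qu ru i
            \<and> Lf qu ru i \<le> Rf n b qu ru i \<and> Lf qv rv i \<le> Rf n b qv rv i"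
  proof (intro allI impI)
    fix i assume i: "i < n"
    have s: "Suc i mod n \<noteq> i" using suc_mod_ne i assms by auto
    show "Lf qu ru i \<le> Rf n b qv rv i \<and> Lf qv rv i \<le> Rf n b qu ru i
            \<and> Lf qu ru i \<le> Rf n b qu ru i \<and> Lf qv rv i \<le> Rf n b qv rv i"
      using H s assms(4,5) by (auto simp: Lf_def Rf_def)
  qed
qed

theorem theorem4p1:
  fixes n b :: nat
  assumes "n \<ge> 2" and "b \<ge> 1"
  shows "boxicity (circ_V (n*b)) (circ_adj (n*b) b)
           \<le> chromatic_number (circ_V (n*b)) (circ_adj (n*b) b)"
proof -
  define a where "a = n * b"
  have rep: "box_representable (circ_V a) (circ_adj a b) n"
    unfolding box_representable_def
  proof (intro exI conjI ballI allI impI)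
    fix v i assume "v \<in> circ_V a" "i < n"
    show "Lf (v div b) (v mod b) i \<le> Rf n b (v div b) (v mod b) i"
      using assms by (auto simp: Lf_def Rf_def)
  next
    fix u v assume uV: "u \<in> circ_V a" and vV: "v \<in> circ_V a" and ne: "u \<noteq> v"
    have ua: "u < a" and va: "v < a" using uV vV by (auto simp: circ_V_def)
    have qu: "u div b < n" and qv: "v div b < n"
      using ua va unfolding a_def by (auto intro: less_mult_imp_div_less)
    have ru: "u mod b < b" and rv: "v mod b < b" using assms by auto
    have pne: "(u div b, u mod b) \<noteq> (v div b, v mod b)"
    proof
      assume "(u div b, u mod b) = (v div b, v mod b)"
      hence "u div b * b + u mod b = v div b * b + v mod b" by simp
      thus False using ne by simp
    qed
    have n1: "(u + a - v) mod a < b \<longleftrightarrow> (u div b = v div b \<and> v mod b \<le> u mod b) \<or> (u div b = Suc (v div b) mod n \<and> u mod b < v mod b)"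
      using near_iff[OF assms(1) qu qv ru rv] unfolding div_mult_mod_eq a_def .
    have n2: "(v + a - u) mod a < b \<longleftrightarrow> (v div b = u div b \<and> u mod b \<le> v mod b) \<or> (v div b = Suc (u div b) mod n \<and> v mod b < u mod b)"
      using near_iff[OF assms(1) qv qu rv ru] unfolding div_mult_mod_eq a_def .
    show "circ_adj a b u v \<longleftrightarrow>
      box_k n (Lf (u div b) (u mod b)) (Rf n b (u div b) (u mod b)) \<inter>
      box_k n (Lf (v div b) (v mod b)) (Rf n b (v div b) (v mod b)) \<noteq> {}"
      unfolding box_int_iff adj_iff[OF ua va ne assms(2)] n1 n2
      using comb[OF assms(1) qu qv ru rv pne] by (rule sym)
  qed
  have bx: "boxicity (circ_V a) (circ_adj a b) \<le> n"
    unfolding boxicity_def by (rule Least_le) (rule rep)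
  have col_ex: "colorable (circ_V a) (circ_adj a b) a"
    unfolding colorable_def by (rule exI[of _ id]) (auto simp: circ_V_def)
  have lower: "n \<le> k" if ck: "colorable (circ_V a) (circ_adj a b) k" for k
  proof -
    obtain c where c1: "\<forall>v\<in>circ_V a. c v < k"
      and c2: "\<forall>u\<in>circ_V a. \<forall>v\<in>circ_V a. u \<noteq> v \<and> circ_adj a b u v \<longrightarrow> c u \<noteq> c v"
      using ck unfolding colorable_def by blast
    have memb: "j * b \<in> circ_V a" if "j < n" for j
    proof -
      have "j * b < n * b" using that assms by simp
      thus ?thesis unfolding circ_V_def a_def by simp
    qed
    have inj: "inj_on (\<lambda>j. c (j * b)) {..<n}"
    proof (rule inj_onI)
      fix j j' assume j: "j \<in> {..<n}" and j': "j' \<in> {..<n}" and eq: "c (j * b) = c (j' * b)"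
      show "j = j'"
      proof (rule ccontr)
        assume jne: "j \<noteq> j'"
        have jn: "j < n" "j' < n" using j j' by auto
        have b0: "(0::nat) < b" using assms by simp
        have ne: "j * b \<noteq> j' * b" using jne assms by simp
        have n1: "\<not> (j * b + a - j' * b) mod a < b"
          using near_iff[OF assms(1) jn(1) jn(2) b0 b0] jne unfolding a_def by simp
        have n2: "\<not> (j' * b + a - j * b) mod a < b"
          using near_iff[OF assms(1) jn(2) jn(1) b0 b0] jne unfolding a_def by simp
        have ua: "j * b < a" and va: "j' * b < a" using memb jn unfolding circ_V_def by auto
        have "circ_adj a b (j * b) (j' * b)"
          using adj_iff[OF ua va ne assms(2)] n1 n2 by blast
        thus False using c2 memb[OF jn(1)] memb[OF jn(2)] ne eq by blast
      qed
    qed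
    have "card {..<n} \<le> card {..<k}"
      by (rule card_inj_on_le[OF inj]) (use c1 memb in auto)
    thus ?thesis by simp
  qed
  have "colorable (circ_V a) (circ_adj a b) (chromatic_number (circ_V a) (circ_adj a b))"
    unfolding chromatic_number_def by (rule LeastI) (rule col_ex)
  hence "n \<le> chromatic_number (circ_V a) (circ_adj a b)" by (rule lower)
  with bx show ?thesis unfolding a_def by linarith
qed

end
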